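(* Assume the setup and monomial order in the context. For every $v\in M$ and all $j_1,j_2,i_1,i_2\in[n]$, the monomial $v_{j_1,i_1}v^\dagger_{i_2,j_2}$ does not lie in $\mathrm{Tip}(I)$ if and only if $(i_1,i_2)\ne(n,1)$ and $(j_1,j_2)\ne(n,1)$.
   Context: Let $k$ be a field and $n\ge 2$ an integer; write $[n]=\{1,\dots,n\}$ and $r(i)=n+1-i$. Let $X=\{u_{j,i},u^*_{j,i}:(j,i)\in[n]^2\}$ be a set of $2n^2$ distinct symbols and let $*$ be the involution of $X$ exchanging $u_{j,i}$ and $u^*_{j,i}$. Let $k\langle X\rangle$ be the free unital $k$-algebra on $X$. For an $n\times n$ matrix $v=(v_{j,i})$ with entries in $X$ define $n\times n$ matrices $v^t,v^\star,v^\dagger$ with entries in $X$ by $v^t_{j,i}=v_{i,j}$, $v^\star_{j,i}=(v_{r(j),r(i)})^*$, $v^\dagger_{j,i}=(v_{r(i),r(j)})^*$. Let $u=(u_{j,i})$ and $M=\{u,u^t,u^\star,u^\dagger\}$. Let $I$ be the two-sided ideal generated by $R=\{\sum_{s=1}^n v_{j,r(s)}v^\dagger_{s,r(i)}-\delta_{j,i}1: v\in M,(j,i)\in[n]^2\}$. Monomial order: let $\le$ be the total order on $X$ with $u^*_{t,s}<u_{j,i}$ for all indices, $u_{t,s}<u_{j,i}$ iff $(t,s)<(j,i)$ lexicographically, and $u^*_{t,s}<u^*_{j,i}$ iff $(j,i)<(t,s)$ lexicographically; extend it degree-lexicographically to monomials. For $0\ne p\in k\langle X\rangle$, $\mathrm{tip}(p)$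 is the $\le$-largest monomial with nonzero coefficient in $p$; $\mathrm{Tip}(I)=\{\mathrm{tip}(p):0\ne p\in I\}$. *)

theory Defs
  imports Main
begin

text \<open>Symbols of X: U j i stands for u_{j,i}, Ustar j i for u*_{j,i}; indices meant in [n] = {1..n}.\<close>
datatype sym = U nat nat | Ustar nat nat

text \<open>Monomials of the free algebra are words over X; elements of k<X> are
  coefficient functions on words (the ideal I only contains finitely supported ones).\<close>
type_synonym 'k fpoly = "sym list \<Rightarrow> 'k"

fun sstar :: "sym \<Rightarrow> sym" where
  "sstar (U j i) = Ustar j i"
| "sstar (Ustar j i) = U j i"

definition rev_idx :: "nat \<Rightarrow> nat \<Rightarrow> nat" where
  "rev_idx n i = n + 1 - i"

text \<open>Matrices with entries in X, as functions of (row, column).\<close>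
type_synonym smat = "nat \<Rightarrow> nat \<Rightarrow> sym"

definition mat_t :: "smat \<Rightarrow> smat" where
  "mat_t v = (\<lambda>j i. v i j)"

definition mat_star :: "nat \<Rightarrow> smat \<Rightarrow> smat" where
  "mat_star n v = (\<lambda>j i. sstar (v (rev_idx n j) (rev_idx n i)))"

definition mat_dag :: "nat \<Rightarrow> smat \<Rightarrow> smat" where
  "mat_dag n v = (\<lambda>j i. sstar (v (rev_idx n i) (rev_idx n j)))"

definition umat :: smat where
  "umat = (\<lambda>j i. U j i)"

definition Mset :: "nat \<Rightarrow> smat set" where
  "Mset n = {umat, mat_t umat, mat_star n umat, mat_dag n umat}"

definition monom :: "sym list \<Rightarrow> 'k::field fpoly" where
  "monom w = (\<lambda>w'. if w' = w then 1 else 0)"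

definition rel :: "nat \<Rightarrow> smat \<Rightarrow> nat \<Rightarrow> nat \<Rightarrow> 'k::field fpoly" where
  "rel n v j i = (\<lambda>w. (\<Sum>s\<in>{1..n}. monom [v j (rev_idx n s), mat_dag n v s (rev_idx n i)] w)
                     - (if j = i then monom [] w else 0))"

definition Rset :: "nat \<Rightarrow> 'k::field fpoly set" where
  "Rset n = {rel n v j i | v j i. v \<in> Mset n \<and> j \<in> {1..n} \<and> i \<in> {1..n}}"

text \<open>Product a * p * b of a polynomial p with monomials a and b.\<close>
definition mmult :: "sym list \<Rightarrow> 'k::field fpoly \<Rightarrow> sym list \<Rightarrow> 'k fpoly" where
  "mmult a p b = (\<lambda>w. if length a + length b \<le> length w \<and> take (length a) w = a
                          \<and> drop (length w - length b) w = b
                       then p (drop (length a) (take (length w - length b) w)) else 0)"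

inductive_set ideal_gen :: "'k::field fpoly set \<Rightarrow> 'k fpoly set" for G where
  zero: "(\<lambda>_. 0) \<in> ideal_gen G"
| gen: "g \<in> G \<Longrightarrow> g \<in> ideal_gen G"
| add: "p \<in> ideal_gen G \<Longrightarrow> q \<in> ideal_gen G \<Longrightarrow> (\<lambda>w. p w + q w) \<in> ideal_gen G"
| smult_mmult: "p \<in> ideal_gen G \<Longrightarrow> (\<lambda>w. c * mmult a p b w) \<in> ideal_gen G"

definition Iideal :: "nat \<Rightarrow> 'k::field fpoly set" where
  "Iideal n = ideal_gen (Rset n)"

fun sym_less :: "sym \<Rightarrow> sym \<Rightarrow> bool" where
  "sym_less (Ustar _ _) (U _ _) = True"
| "sym_less (U _ _) (Ustar _ _) = False"
| "sym_less (U t s) (U j i) = (t < j \<or> (t = j \<and> s < i))"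
| "sym_less (Ustar t s) (Ustar j i) = (j < t \<or> (j = t \<and> i < s))"

definition mono_less :: "sym list \<Rightarrow> sym list \<Rightarrow> bool" where
  "mono_less w1 w2 = (length w1 < length w2 \<or>
     (length w1 = length w2 \<and>
      (\<exists>k < length w1. take k w1 = take k w2 \<and> sym_less (w1 ! k) (w2 ! k))))"

definition is_tip :: "'k::field fpoly \<Rightarrow> sym list \<Rightarrow> bool" where
  "is_tip p w = (p w \<noteq> 0 \<and> (\<forall>w'. p w' \<noteq> 0 \<longrightarrow> w' = w \<or> mono_less w' w))"

definition Tip :: "'k::field fpoly set \<Rightarrow> sym list set" where
  "Tip J = {w. \<exists>p\<in>J. p \<noteq> (\<lambda>_. 0) \<and> is_tip p w}"

end

theory Submission
  imports Defs Complex_Main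
begin


type_synonym grp = "rat \<times> rat"

fun gmul :: "grp \<Rightarrow> grp \<Rightarrow> grp" where
  "gmul (s, t) (s', t') = (s * s', t + s * t')"

lemma sum3_swap: "(\<Sum>b\<in>A. \<Sum>i\<in>B. \<Sum>j\<in>C. F b i j) = (\<Sum>i\<in>B. \<Sum>j\<in>C. \<Sum>b\<in>A. F b i j)"
  by (subst sum.swap) (rule sum.cong[OF refl], rule sum.swap)

lemma rr: "i \<in> {1..n} \<Longrightarrow> rev_idx n (rev_idx n i) = i"
  by (auto simp: rev_idx_def)
lemma r_in: "i \<in> {1..n} \<Longrightarrow> rev_idx n i \<in> {1..n}"
  by (auto simp: rev_idx_def)
lemma r_inj: "i \<in> {1..n} \<Longrightarrow> j \<in> {1..n} \<Longrightarrow> rev_idx n i = rev_idx n j \<longleftrightarrow> i = j"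
  by (auto simp: rev_idx_def)
lemma rev_reindex: "(\<Sum>s\<in>{1..n}. F (rev_idx n s)) = (\<Sum>b\<in>{1..n}. F b)"
  by (rule sum.reindex_bij_witness[where i="rev_idx n" and j="rev_idx n"]) (auto simp: rev_idx_def)

lemma mmult_at: "mmult a p b (a @ x @ b) = p x"
  by (simp add: mmult_def)

lemma mmult_supp: "mmult a p b w \<noteq> 0 \<Longrightarrow> \<exists>x. w = a @ x @ b \<and> p x \<noteq> 0"
proof -
  assume h: "mmult a p b w \<noteq> 0"
  let ?m = "drop (length a) (take (length w - length b) w)"
  from h have c1: "length a + length b \<le> length w" and c2: "take (length a) w = a"
    and c3: "drop (length w - length b) w = b" and pm: "p ?m \<noteq> 0"
    by (auto simp: mmult_def split: if_splits)
  have "length a \<le> length w - length b" using c1 by arith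
  then have "take (length a) (take (length w - length b) w) = a"
    using c2 by (simp add: min_def)
  then have "take (length w - length b) w = a @ ?m"
    by (metis append_take_drop_id)
  then have "w = a @ ?m @ b"
    using c3 by (metis append.assoc append_take_drop_id)
  then show ?thesis using pm by blast
qed

locale urep =
  fixes n :: nat and M0 M0i M1 M1i :: "nat \<Rightarrow> nat \<Rightarrow> 'k::field" and pi :: "nat \<Rightarrow> nat"
    and G Gi :: "nat \<Rightarrow> grp"
  assumes inv0: "\<lbrakk>i \<in> {1..n}; j \<in> {1..n}\<rbrakk> \<Longrightarrow> (\<Sum>b\<in>{1..n}. M0 i b * M0i b j) = (if i = j then 1 else 0)"
    and inv0': "\<lbrakk>i \<in> {1..n}; j \<in> {1..n}\<rbrakk> \<Longrightarrow> (\<Sum>b\<in>{1..n}. M0i i b * M0 b j) = (if i = j then 1 else 0)"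
    and inv1: "\<lbrakk>i \<in> {1..n}; j \<in> {1..n}\<rbrakk> \<Longrightarrow> (\<Sum>b\<in>{1..n}. M1 i b * M1i b j) = (if i = j then 1 else 0)"
    and inv1': "\<lbrakk>i \<in> {1..n}; j \<in> {1..n}\<rbrakk> \<Longrightarrow> (\<Sum>b\<in>{1..n}. M1i i b * M1 b j) = (if i = j then 1 else 0)"
    and pi_bij: "bij_betw pi {1..n} {1..n}"
    and gc1: "gmul (gmul h (G i)) (Gi i) = h"
    and gc2: "gmul (gmul h (Gi i)) (G i) = h"
begin

definition rl :: "sym \<Rightarrow> (grp \<Rightarrow> 'k) \<Rightarrow> grp \<Rightarrow> 'k" where
  "rl x f h = (case x of U a b \<Rightarrow> (\<Sum>i\<in>{1..n}. M0 a i * M1 (pi i) b * f (gmul h (G i)))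
      | Ustar c d \<Rightarrow> (\<Sum>j\<in>{1..n}. M0i j c * M1i d (pi j) * f (gmul h (Gi j))))"

lemma rlU: "rl (U a b) f h = (\<Sum>i\<in>{1..n}. M0 a i * M1 (pi i) b * f (gmul h (G i)))"
  by (simp add: rl_def)
lemma rlS: "rl (Ustar c d) f h = (\<Sum>j\<in>{1..n}. M0i j c * M1i d (pi j) * f (gmul h (Gi j)))"
  by (simp add: rl_def)

lemma pi_inj: "i \<in> {1..n} \<Longrightarrow> j \<in> {1..n} \<Longrightarrow> pi i = pi j \<longleftrightarrow> i = j"
  using pi_bij unfolding bij_betw_def inj_on_def by blast
lemma pi_in: "i \<in> {1..n} \<Longrightarrow> pi i \<in> {1..n}"
  using pi_bij unfolding bij_betw_def by blast
lemma pi_in2: "Suc 0 \<le> i \<Longrightarrow> i \<le> n \<Longrightarrow> Suc 0 \<le> pi i \<and> pi i \<le> n"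
  using pi_in[of i] by auto
lemma pi_reindex: "(\<Sum>i\<in>{1..n}. F (pi i)) = (\<Sum>y\<in>{1..n}. F y)"
  using sum.reindex_bij_betw[OF pi_bij, of F] by simp

lemma relA:
  assumes a: "a \<in> {1..n}" and c: "c \<in> {1..n}"
  shows "(\<Sum>b\<in>{1..n}. rl (U a b) (rl (Ustar c b) f) h) = (if a = c then f h else 0)"
proof -
  have "(\<Sum>b\<in>{1..n}. rl (U a b) (rl (Ustar c b) f) h) =
     (\<Sum>b\<in>{1..n}. \<Sum>i\<in>{1..n}. \<Sum>j\<in>{1..n}. M0 a i * M0i j c * (M1 (pi i) b * M1i b (pi j)) * f (gmul (gmul h (G i)) (Gi j)))"
    unfolding rlU rlS by (simp add: sum_distrib_left mult.assoc mult.left_commute)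
  also have "\<dots> = (\<Sum>i\<in>{1..n}. \<Sum>j\<in>{1..n}. M0 a i * M0i j c * (\<Sum>b\<in>{1..n}. M1 (pi i) b * M1i b (pi j)) * f (gmul (gmul h (G i)) (Gi j)))"
    by (subst sum3_swap) (simp add: sum_distrib_left sum_distrib_right)
  also have "\<dots> = (\<Sum>i\<in>{1..n}. \<Sum>j\<in>{1..n}. (if i = j then M0 a i * M0i j c * f (gmul (gmul h (G i)) (Gi j)) else 0))"
    apply (intro sum.cong refl)
    apply (subst inv1)
    apply (auto simp: pi_in2 pi_inj)
    done
  also have "\<dots> = (\<Sum>i\<in>{1..n}. M0 a i * M0i i c) * f h"
    by (simp add: gc1 sum_distrib_right)
  also have "\<dots> = (if a = c then f h else 0)" using inv0[OF a c] by simp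
  finally show ?thesis .
qed
lemma relB:
  assumes b: "b \<in> {1..n}" and d: "d \<in> {1..n}"
  shows "(\<Sum>a\<in>{1..n}. rl (U a b) (rl (Ustar a d) f) h) = (if b = d then f h else 0)"
proof -
  have "(\<Sum>a\<in>{1..n}. rl (U a b) (rl (Ustar a d) f) h) =
     (\<Sum>a\<in>{1..n}. \<Sum>i\<in>{1..n}. \<Sum>j\<in>{1..n}. (M0i j a * M0 a i) * (M1 (pi i) b * M1i d (pi j) * f (gmul (gmul h (G i)) (Gi j))))"
    unfolding rlU rlS by (simp add: sum_distrib_left mult.assoc mult.left_commute)
  also have "\<dots> = (\<Sum>i\<in>{1..n}. \<Sum>j\<in>{1..n}. (\<Sum>a\<in>{1..n}. M0i j a * M0 a i) * (M1 (pi i) b * M1i d (pi j) * f (gmul (gmul h (G i)) (Gi j))))"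
    by (subst sum3_swap) (simp add: sum_distrib_left sum_distrib_right)
  also have "\<dots> = (\<Sum>i\<in>{1..n}. \<Sum>j\<in>{1..n}. (if j = i then M1 (pi i) b * M1i d (pi j) * f (gmul (gmul h (G i)) (Gi j)) else 0))"
    apply (intro sum.cong refl)
    apply (subst inv0')
    apply auto
    done
  also have "\<dots> = (\<Sum>i\<in>{1..n}. M1i d (pi i) * M1 (pi i) b) * f h"
    by (simp add: gc1 sum_distrib_right sum_distrib_left mult_ac)
  also have "\<dots> = (\<Sum>y\<in>{1..n}. M1i d y * M1 y b) * f h"
    using pi_reindex[of "\<lambda>y. M1i d y * M1 y b"] by simp
  also have "\<dots> = (if b = d then f h else 0)" using inv1'[OF d b] by auto
  finally show ?thesis .
qed

lemma relC:
  assumes a: "a \<in> {1..n}" and c: "c \<in> {1..n}"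
  shows "(\<Sum>b\<in>{1..n}. rl (Ustar a b) (rl (U c b) f) h) = (if a = c then f h else 0)"
proof -
  have "(\<Sum>b\<in>{1..n}. rl (Ustar a b) (rl (U c b) f) h) =
     (\<Sum>b\<in>{1..n}. \<Sum>j\<in>{1..n}. \<Sum>i\<in>{1..n}. M0i j a * M0 c i * (M1 (pi i) b * M1i b (pi j)) * f (gmul (gmul h (Gi j)) (G i)))"
    unfolding rlU rlS by (simp add: sum_distrib_left mult.assoc mult.left_commute)
  also have "\<dots> = (\<Sum>j\<in>{1..n}. \<Sum>i\<in>{1..n}. M0i j a * M0 c i * (\<Sum>b\<in>{1..n}. M1 (pi i) b * M1i b (pi j)) * f (gmul (gmul h (Gi j)) (G i)))"
    by (subst sum3_swap) (simp add: sum_distrib_left sum_distrib_right)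
  also have "\<dots> = (\<Sum>j\<in>{1..n}. \<Sum>i\<in>{1..n}. (if i = j then M0i j a * M0 c i * f (gmul (gmul h (Gi j)) (G i)) else 0))"
    apply (intro sum.cong refl)
    apply (subst inv1)
    apply (auto simp: pi_in2 pi_inj)
    done
  also have "\<dots> = (\<Sum>j\<in>{1..n}. M0 c j * M0i j a) * f h"
    by (simp add: gc2 sum_distrib_right sum_distrib_left mult_ac)
  also have "\<dots> = (if a = c then f h else 0)" using inv0[OF c a] by auto
  finally show ?thesis .
qed

lemma relD:
  assumes b: "b \<in> {1..n}" and d: "d \<in> {1..n}"
  shows "(\<Sum>a\<in>{1..n}. rl (Ustar a b) (rl (U a d) f) h) = (if b = d then f h else 0)"
proof -
  have "(\<Sum>a\<in>{1..n}. rl (Ustar a b) (rl (U a d) f) h) =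
     (\<Sum>a\<in>{1..n}. \<Sum>j\<in>{1..n}. \<Sum>i\<in>{1..n}. (M0i j a * M0 a i) * (M1i b (pi j) * M1 (pi i) d * f (gmul (gmul h (Gi j)) (G i))))"
    unfolding rlU rlS by (simp add: sum_distrib_left mult.assoc mult.left_commute)
  also have "\<dots> = (\<Sum>j\<in>{1..n}. \<Sum>i\<in>{1..n}. (\<Sum>a\<in>{1..n}. M0i j a * M0 a i) * (M1i b (pi j) * M1 (pi i) d * f (gmul (gmul h (Gi j)) (G i))))"
    by (subst sum3_swap) (simp add: sum_distrib_left sum_distrib_right)
  also have "\<dots> = (\<Sum>j\<in>{1..n}. \<Sum>i\<in>{1..n}. (if j = i then M1i b (pi j) * M1 (pi i) d * f (gmul (gmul h (Gi j)) (G i)) else 0))"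
    apply (intro sum.cong refl)
    apply (subst inv0')
    apply auto
    done
  also have "\<dots> = (\<Sum>j\<in>{1..n}. M1i b (pi j) * M1 (pi j) d) * f h"
    by (simp add: gc2 sum_distrib_right sum_distrib_left mult_ac)
  also have "\<dots> = (\<Sum>y\<in>{1..n}. M1i b y * M1 y d) * f h"
    using pi_reindex[of "\<lambda>y. M1i b y * M1 y d"] by simp
  also have "\<dots> = (if b = d then f h else 0)" using inv1'[OF b d] by auto
  finally show ?thesis .
qed
primrec rw :: "sym list \<Rightarrow> (grp \<Rightarrow> 'k) \<Rightarrow> grp \<Rightarrow> 'k" where
  "rw [] f = f"
| "rw (x # w) f = rl x (rw w f)"

lemma rw_append: "rw (a @ b) f = rw a (rw b f)"
  by (induction a) auto

lemma rl_lin: "rl x (\<lambda>h. \<Sum>s\<in>X. c s * F s h) h0 = (\<Sum>s\<in>X. c s * rl x (F s) h0)"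
proof (cases x)
  case (U a b)
  show ?thesis unfolding U rlU
    by (simp add: sum_distrib_left mult_ac) (rule sum.swap)
next
  case (Ustar a b)
  show ?thesis unfolding Ustar rlS
    by (simp add: sum_distrib_left mult_ac) (rule sum.swap)
qed

lemma rw_lin: "rw w (\<lambda>h. \<Sum>s\<in>X. c s * F s h) = (\<lambda>h0. \<Sum>s\<in>X. c s * rw w (F s) h0)"
proof (induction w)
  case Nil
  then show ?case by simp
next
  case (Cons x w)
  show ?case by (rule ext) (simp add: Cons rl_lin)
qed

lemma rw_zero: "rw w (\<lambda>_. 0) = (\<lambda>_. 0)"
  using rw_lin[where w=w and X="{}"] by simp

lemma rel_zero:
  assumes v: "v \<in> Mset n" and j: "j \<in> {1..n}" and i: "i \<in> {1..n}"
  shows "(\<Sum>s\<in>{1..n}. rw [v j (rev_idx n s), mat_dag n v s (rev_idx n i)] f h) = (if j = i then f h else 0)"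
proof -
  from v consider "v = umat" | "v = mat_t umat" | "v = mat_star n umat" | "v = mat_dag n umat"
    unfolding Mset_def by blast
  then show ?thesis
  proof cases
    case 1
    have "(\<Sum>s\<in>{1..n}. rw [v j (rev_idx n s), mat_dag n v s (rev_idx n i)] f h)
        = (\<Sum>s\<in>{1..n}. rl (U j (rev_idx n s)) (rl (Ustar i (rev_idx n s)) f) h)"
      using i by (intro sum.cong refl) (simp add: 1 umat_def mat_dag_def rr)
    also have "\<dots> = (\<Sum>b\<in>{1..n}. rl (U j b) (rl (Ustar i b) f) h)"
      by (rule rev_reindex)
    finally show ?thesis using relA[OF j i] by simp
  next
    case 2
    have "(\<Sum>s\<in>{1..n}. rw [v j (rev_idx n s), mat_dag n v s (rev_idx n i)] f h)
        = (\<Sum>s\<in>{1..n}. rl (U (rev_idx n s) j) (rl (Ustar (rev_idx n s) i) f) h)"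
      using i by (intro sum.cong refl) (simp add: 2 umat_def mat_dag_def mat_t_def rr)
    also have "\<dots> = (\<Sum>b\<in>{1..n}. rl (U b j) (rl (Ustar b i) f) h)"
      by (rule rev_reindex)
    finally show ?thesis using relB[OF j i] by simp
  next
    case 3
    have "(\<Sum>s\<in>{1..n}. rw [v j (rev_idx n s), mat_dag n v s (rev_idx n i)] f h)
        = (\<Sum>s\<in>{1..n}. rl (Ustar (rev_idx n j) s) (rl (U (rev_idx n i) s) f) h)"
      using i by (intro sum.cong refl) (simp add: 3 umat_def mat_dag_def mat_star_def rr r_in)
    then show ?thesis using relC[OF r_in[OF j] r_in[OF i]] r_inj[OF j i] by simp
  next
    case 4
    have "(\<Sum>s\<in>{1..n}. rw [v j (rev_idx n s), mat_dag n v s (rev_idx n i)] f h)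
        = (\<Sum>s\<in>{1..n}. rl (Ustar s (rev_idx n j)) (rl (U s (rev_idx n i)) f) h)"
      using i by (intro sum.cong refl) (simp add: 4 umat_def mat_dag_def rr r_in)
    then show ?thesis using relD[OF r_in[OF j] r_in[OF i]] r_inj[OF j i] by simp
  qed
qed

definition Phi :: "'k fpoly \<Rightarrow> (grp \<Rightarrow> 'k) \<Rightarrow> grp \<Rightarrow> 'k" where
  "Phi p f h = (\<Sum>w\<in>{w. p w \<noteq> 0}. p w * rw w f h)"

lemma Phi_super: "finite S \<Longrightarrow> {w. p w \<noteq> 0} \<subseteq> S \<Longrightarrow> Phi p f h = (\<Sum>w\<in>S. p w * rw w f h)"
  unfolding Phi_def by (rule sum.mono_neutral_left) auto

lemma Phi_rel:
  fixes ws :: "nat \<Rightarrow> sym list" and c :: bool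
  defines "P \<equiv> (\<lambda>w. (\<Sum>s\<in>{1..n}. monom (ws s) w) - (if c then monom [] w else 0) :: 'k)"
  shows "finite {w. P w \<noteq> 0}" and "Phi P f h = (\<Sum>s\<in>{1..n}. rw (ws s) f h) - (if c then f h else 0)"
proof -
  let ?S = "ws ` {1..n} \<union> {[]}"
  have fin: "finite ?S" by simp
  have sub: "{w. P w \<noteq> 0} \<subseteq> ?S"
  proof
    fix w assume "w \<in> {w. P w \<noteq> 0}"
    then have "P w \<noteq> 0" by simp
    show "w \<in> ?S"
    proof (rule ccontr)
      assume "w \<notin> ?S"
      then have "\<forall>s\<in>{1..n}. w \<noteq> ws s" and "w \<noteq> []" by auto
      then have "P w = 0" unfolding P_def monom_def by simp
      with \<open>P w \<noteq> 0\<close> show False by simp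
    qed
  qed
  show "finite {w. P w \<noteq> 0}" using finite_subset[OF sub fin] .
  have "Phi P f h = (\<Sum>w\<in>?S. P w * rw w f h)" by (rule Phi_super[OF fin sub])
  also have "\<dots> = (\<Sum>w\<in>?S. \<Sum>s\<in>{1..n}. (if w = ws s then rw w f h else 0))
       - (\<Sum>w\<in>?S. (if c \<and> w = [] then rw w f h else 0))"
  proof -
    have pw: "P w * rw w f h = (\<Sum>s\<in>{1..n}. (if w = ws s then rw w f h else 0)) - (if c \<and> w = [] then rw w f h else 0)" for w
      unfolding P_def monom_def by (cases c) (auto simp: left_diff_distrib sum_distrib_right intro!: sum.cong)
    show ?thesis by (simp only: pw sum_subtractf)
  qed
  also have "(\<Sum>w\<in>?S. \<Sum>s\<in>{1..n}. (if w = ws s then rw w f h else 0)) = (\<Sum>s\<in>{1..n}. rw (ws s) f h)"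
    by (subst sum.swap) (simp add: fin)
  also have "(\<Sum>w\<in>?S. (if c \<and> w = [] then rw w f h else 0)) = (if c then f h else 0)"
    by (cases c) (simp_all add: fin)
  finally show "Phi P f h = (\<Sum>s\<in>{1..n}. rw (ws s) f h) - (if c then f h else 0)" .
qed

lemma ideal_Phi: "p \<in> ideal_gen (Rset n) \<Longrightarrow> finite {w. p w \<noteq> 0} \<and> (\<forall>f h. Phi p f h = 0)"
proof (induction rule: ideal_gen.induct)
  case zero
  then show ?case by (simp add: Phi_def)
next
  case (gen g)
  then obtain v j i where v: "v \<in> Mset n" and j: "j \<in> {1..n}" and i: "i \<in> {1..n}" and g: "g = rel n v j i"
    unfolding Rset_def by blast
  let ?ws = "\<lambda>s. [v j (rev_idx n s), mat_dag n v s (rev_idx n i)]"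
  have geq: "g = (\<lambda>w. (\<Sum>s\<in>{1..n}. monom (?ws s) w) - (if j = i then monom [] w else 0))"
    unfolding g rel_def by simp
  show ?case
    unfolding geq using Phi_rel[of ?ws "j = i"] rel_zero[OF v j i] by simp
next
  case (add p q)
  let ?S = "{w. p w \<noteq> 0} \<union> {w. q w \<noteq> 0}"
  have fin: "finite ?S" using add by simp
  have sub: "{w. p w + q w \<noteq> 0} \<subseteq> ?S" by auto
  have "Phi (\<lambda>w. p w + q w) f h = 0" for f h
  proof -
    have "Phi (\<lambda>w. p w + q w) f h = (\<Sum>w\<in>?S. (p w + q w) * rw w f h)"
      using Phi_super[OF fin sub] by simp
    also have "\<dots> = (\<Sum>w\<in>?S. p w * rw w f h) + (\<Sum>w\<in>?S. q w * rw w f h)"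
      by (simp add: distrib_right sum.distrib)
    also have "\<dots> = Phi p f h + Phi q f h"
      using Phi_super[OF fin, of p] Phi_super[OF fin, of q] by auto
    finally show ?thesis using add by simp
  qed
  then show ?case using finite_subset[OF sub fin] by simp
next
  case (smult_mmult p c a b)
  let ?P = "\<lambda>w. c * mmult a p b w"
  let ?g = "\<lambda>x. a @ x @ b"
  let ?S = "?g ` {w. p w \<noteq> 0}"
  have fin: "finite ?S" using smult_mmult by simp
  have sub: "{w. ?P w \<noteq> 0} \<subseteq> ?S"
  proof
    fix w assume "w \<in> {w. ?P w \<noteq> 0}"
    then have "mmult a p b w \<noteq> 0" by simp
    then obtain x where "w = ?g x" "p x \<noteq> 0" using mmult_supp by blast
    then show "w \<in> ?S" by blast
  qed
  have inj: "inj_on ?g {w. p w \<noteq> 0}" by (rule inj_onI) simp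
  have "Phi ?P f h = 0" for f h
  proof -
    have "Phi ?P f h = (\<Sum>w\<in>?S. ?P w * rw w f h)" by (rule Phi_super[OF fin sub])
    also have "\<dots> = (\<Sum>x\<in>{w. p w \<noteq> 0}. ?P (?g x) * rw (?g x) f h)"
      by (rule sum.reindex[OF inj, unfolded comp_def])
    also have "\<dots> = (\<Sum>x\<in>{w. p w \<noteq> 0}. c * (p x * rw a (rw x (rw b f)) h))"
      by (simp add: mmult_at rw_append mult.assoc)
    also have "\<dots> = c * rw a (\<lambda>h'. \<Sum>x\<in>{w. p w \<noteq> 0}. p x * rw x (rw b f) h') h"
      by (simp add: rw_lin sum_distrib_left)
    also have "(\<lambda>h'. \<Sum>x\<in>{w. p w \<noteq> 0}. p x * rw x (rw b f) h') = (\<lambda>_. 0)"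
    proof (rule ext)
      fix h'
      show "(\<Sum>x\<in>{w. p w \<noteq> 0}. p x * rw x (rw b f) h') = 0"
        using smult_mmult.IH unfolding Phi_def by blast
    qed
    finally show ?thesis by (simp add: rw_zero)
  qed
  then show ?case using finite_subset[OF sub fin] by simp
qed

end


definition el :: "'k::field \<Rightarrow> nat \<Rightarrow> nat \<Rightarrow> nat \<Rightarrow> nat \<Rightarrow> 'k" where
  "el t x y i j = (if i = j then 1 else 0) + (if i = x \<and> j = y then t else 0)"

lemma el_inv:
  assumes "x \<noteq> y" "i \<in> {1..n}" "j \<in> {1..n}" "y \<in> {1..n}"
  shows "(\<Sum>b\<in>{1..n}. el t x y i b * el (-t) x y b j) = (if i = j then 1 else 0)"
proof -
  have "(\<Sum>b\<in>{1..n}. el t x y i b * el (-t) x y b j) =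
     (\<Sum>b\<in>{1..n}. (if b = i then (if i = j then 1 else 0) else 0) + (if b = i then (if b = x \<and> j = y then -t else 0) else 0)
        + (if b = y then (if i = x then (if b = j then t else 0) else 0) else 0))"
    using assms by (intro sum.cong refl) (auto simp: el_def)
  also have "\<dots> = (if i = j then 1 else 0) + (if i = x \<and> j = y then -t else 0) + (if i = x \<and> y = j then t else 0)"
    using assms by (simp add: sum.distrib)
  also have "\<dots> = (if i = j then 1 else 0)" by auto
  finally show ?thesis .
qed

definition sw :: "nat \<Rightarrow> nat \<Rightarrow> nat \<Rightarrow> nat" where
  "sw x y z = (if z = x then y else if z = y then x else z)"

definition pmap :: "nat \<Rightarrow> nat \<Rightarrow> nat \<Rightarrow> nat \<Rightarrow> nat \<Rightarrow> nat" where
  "pmap p q p' q' = sw (sw p p' q) q' \<circ> sw p p'"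

lemma sw_bij: "x \<in> A \<Longrightarrow> y \<in> A \<Longrightarrow> bij_betw (sw x y) A A"
  by (rule bij_betw_byWitness[where f'="sw x y"]) (auto simp: sw_def)

lemma pmap_bij: "p \<in> A \<Longrightarrow> q \<in> A \<Longrightarrow> p' \<in> A \<Longrightarrow> q' \<in> A \<Longrightarrow> bij_betw (pmap p q p' q') A A"
  unfolding pmap_def
  by (rule bij_betw_trans[OF sw_bij sw_bij]) (auto simp: sw_def)

lemma pmap_p: "p \<noteq> q \<Longrightarrow> p' \<noteq> q' \<Longrightarrow> pmap p q p' q' p = p'"
  by (auto simp: pmap_def sw_def)
lemma pmap_q: "p \<noteq> q \<Longrightarrow> p' \<noteq> q' \<Longrightarrow> pmap p q p' q' q = q'"
  by (auto simp: pmap_def sw_def)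

definition gen :: "nat \<Rightarrow> nat \<Rightarrow> nat \<Rightarrow> grp" where
  "gen p q i = (if i = p then (2, 0) else if i = q then (1, 1) else (1, 0))"
definition geninv :: "nat \<Rightarrow> nat \<Rightarrow> nat \<Rightarrow> grp" where
  "geninv p q i = (if i = p then (1/2, 0) else if i = q then (1, -1) else (1, 0))"

lemma gen_gc1: "gmul (gmul h (gen p q i)) (geninv p q i) = h"
  by (cases h) (auto simp: gen_def geninv_def)
lemma gen_gc2: "gmul (gmul h (geninv p q i)) (gen p q i) = h"
  by (cases h) (auto simp: gen_def geninv_def)

definition okt :: "nat \<Rightarrow> nat \<Rightarrow> nat \<Rightarrow> nat \<Rightarrow> nat \<Rightarrow> bool" where
  "okt n x y p q \<longleftrightarrow> x \<noteq> y \<and> x \<in> {1..n} \<and> y \<in> {1..n} \<and> p \<noteq> q \<and> p \<in> {1..n} \<and> q \<in> {1..n}"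

lemma el_inv':
  assumes "x \<noteq> y" "i \<in> {1..n}" "j \<in> {1..n}" "y \<in> {1..n}"
  shows "(\<Sum>b\<in>{1..n}. el (-t) x y i b * el t x y b j) = (if i = j then 1 else 0)"
  using el_inv[OF assms, of "-t"] by simp

lemma urep_inst:
  assumes a: "okt n x y p q" and b: "okt n x' y' p' q'"
  shows "urep n (el t x y) (el (-t) x y) (el t' x' y') (el (-t') x' y') (pmap p q p' q') (gen p q) (geninv p q)"
proof unfold_locales
  show "\<And>i j. i \<in> {1..n} \<Longrightarrow> j \<in> {1..n} \<Longrightarrow> (\<Sum>b\<in>{1..n}. el t x y i b * el (-t) x y b j) = (if i = j then 1 else 0)"
    by (rule el_inv) (use a in \<open>auto simp: okt_def\<close>)
  show "\<And>i j. i \<in> {1..n} \<Longrightarrow> j \<in> {1..n} \<Longrightarrow> (\<Sum>b\<in>{1..n}. el (-t) x y i b * el t x y b j) = (if i = j then 1 else 0)"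
    by (rule el_inv') (use a in \<open>auto simp: okt_def\<close>)
  show "\<And>i j. i \<in> {1..n} \<Longrightarrow> j \<in> {1..n} \<Longrightarrow> (\<Sum>b\<in>{1..n}. el t' x' y' i b * el (-t') x' y' b j) = (if i = j then 1 else 0)"
    by (rule el_inv) (use b in \<open>auto simp: okt_def\<close>)
  show "\<And>i j. i \<in> {1..n} \<Longrightarrow> j \<in> {1..n} \<Longrightarrow> (\<Sum>b\<in>{1..n}. el (-t') x' y' i b * el t' x' y' b j) = (if i = j then 1 else 0)"
    by (rule el_inv') (use b in \<open>auto simp: okt_def\<close>)
  show "bij_betw (pmap p q p' q') {1..n} {1..n}"
    by (rule pmap_bij) (use a b in \<open>auto simp: okt_def\<close>)
qed (auto simp: gen_gc1 gen_gc2)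



definition dl :: "grp \<Rightarrow> grp \<Rightarrow> 'k::field" where "dl \<gamma> g = (if g = \<gamma> then 1 else 0)"

definition ev :: "nat \<Rightarrow> (nat \<Rightarrow> nat \<Rightarrow> 'k::field) \<Rightarrow> (nat \<Rightarrow> nat \<Rightarrow> 'k) \<Rightarrow> (nat \<Rightarrow> nat \<Rightarrow> 'k) \<Rightarrow> (nat \<Rightarrow> nat \<Rightarrow> 'k)
   \<Rightarrow> (nat \<Rightarrow> nat) \<Rightarrow> nat \<Rightarrow> nat \<Rightarrow> grp \<Rightarrow> sym list \<Rightarrow> 'k" where
  "ev n M0 M0i M1 M1i pm p q \<gamma> w = urep.rw n M0 M0i M1 M1i pm (gen p q) (geninv p q) w (dl \<gamma>) (1, 0)"

lemma gmul1: "gmul (1, 0) g = g" by (cases g) simp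

lemma gen_cases: "gen p q i \<in> {(2,0), (1,1), (1,0)}" by (simp add: gen_def)
lemma geninv_cases: "geninv p q i \<in> {(1/2,0), (1,-1), (1,0)}" by (simp add: geninv_def)

context
  fixes n :: nat and M0 M0i M1 M1i :: "nat \<Rightarrow> nat \<Rightarrow> 'k::field" and pm :: "nat \<Rightarrow> nat" and p q :: nat
  assumes u: "urep n M0 M0i M1 M1i pm (gen p q) (geninv p q)"
begin

lemma rlU_zero:
  assumes "\<forall>g\<in>{(2,0), (1,1), (1,0)}. f (gmul h g) = 0"
  shows "urep.rl n M0 M0i M1 M1i pm (gen p q) (geninv p q) (U a b) f h = 0"
  unfolding urep.rlU[OF u] using assms by (intro sum.neutral ballI) (simp add: gen_def)

lemma rlS_zero:
  assumes "\<forall>g\<in>{(1/2,0), (1,-1), (1,0)}. f (gmul h g) = 0"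
  shows "urep.rl n M0 M0i M1 M1i pm (gen p q) (geninv p q) (Ustar a b) f h = 0"
  unfolding urep.rlS[OF u] using assms by (intro sum.neutral ballI) (simp add: geninv_def)

lemma ev_nil: "\<gamma> \<noteq> (1,0) \<Longrightarrow> ev n M0 M0i M1 M1i pm p q \<gamma> [] = 0"
  by (simp add: ev_def urep.rw.simps[OF u] dl_def)

lemma ev_one:
  assumes "\<gamma> \<notin> {(2,0), (1,1), (1,0), (1/2,0), (1,-1)}"
  shows "ev n M0 M0i M1 M1i pm p q \<gamma> [x] = 0"
proof (cases x)
  case (U a b)
  show ?thesis using assms unfolding U ev_def urep.rw.simps[OF u]
    by (intro rlU_zero) (auto simp: dl_def gmul1)
next
  case (Ustar a b)
  show ?thesis using assms unfolding Ustar ev_def urep.rw.simps[OF u]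
    by (intro rlS_zero) (auto simp: dl_def gmul1)
qed

lemma ev_UU: "\<gamma> \<in> {(2,-2), (2,-1)} \<Longrightarrow> ev n M0 M0i M1 M1i pm p q \<gamma> [U a b, U c d] = 0"
  unfolding ev_def urep.rw.simps[OF u]
  by (intro rlU_zero ballI) (auto intro!: rlU_zero simp: dl_def gmul1)

lemma ev_SS: "\<gamma> \<in> {(2,-2), (2,-1)} \<Longrightarrow> ev n M0 M0i M1 M1i pm p q \<gamma> [Ustar a b, Ustar c d] = 0"
  unfolding ev_def urep.rw.simps[OF u]
  by (intro rlS_zero ballI) (auto intro!: rlS_zero simp: dl_def gmul1)

lemma ev_SU1: "ev n M0 M0i M1 M1i pm p q (2,-2) [Ustar a b, U c d] = 0"
  unfolding ev_def urep.rw.simps[OF u]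
  by (intro rlS_zero ballI) (auto intro!: rlU_zero simp: dl_def gmul1)

lemma ev_US2: "ev n M0 M0i M1 M1i pm p q (2,-1) [U a b, Ustar c d] = 0"
  unfolding ev_def urep.rw.simps[OF u]
  by (intro rlU_zero ballI) (auto intro!: rlS_zero simp: dl_def gmul1)

lemma key1: "p \<noteq> q \<Longrightarrow> dl (2,-2) (gmul (gmul (1,0) (gen p q i)) (geninv p q j)) = (if i = p \<and> j = q then 1 else 0)"
  by (auto simp: dl_def gen_def geninv_def)
lemma key2: "p \<noteq> q \<Longrightarrow> dl (2,-1) (gmul (gmul (1,0) (geninv p q j)) (gen p q i)) = (if i = p \<and> j = q then 1 else 0)"
  by (auto simp: dl_def gen_def geninv_def)

lemma ev_US1:
  assumes pq: "p \<noteq> q" "p \<in> {1..n}" "q \<in> {1..n}"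
  shows "ev n M0 M0i M1 M1i pm p q (2,-2) [U a b, Ustar c d] = M0 a p * M1 (pm p) b * M0i q c * M1i d (pm q)"
proof -
  have inner: "(\<Sum>j\<in>{1..n}. M0i j c * M1i d (pm j) * dl (2,-2) (gmul (gmul (1,0) (gen p q i)) (geninv p q j)))
      = (if i = p then M0i q c * M1i d (pm q) else 0)" for i
  proof -
    have "(\<Sum>j\<in>{1..n}. M0i j c * M1i d (pm j) * dl (2,-2) (gmul (gmul (1,0) (gen p q i)) (geninv p q j)))
        = (\<Sum>j\<in>{1..n}. if j = q then (if i = p then M0i j c * M1i d (pm j) else 0) else 0)"
      by (intro sum.cong refl) (simp add: key1[OF pq(1)])
    then show ?thesis using pq by simp
  qed
  have "ev n M0 M0i M1 M1i pm p q (2,-2) [U a b, Ustar c d] =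
     (\<Sum>i\<in>{1..n}. M0 a i * M1 (pm i) b * (\<Sum>j\<in>{1..n}. M0i j c * M1i d (pm j) * dl (2,-2) (gmul (gmul (1,0) (gen p q i)) (geninv p q j))))"
    unfolding ev_def urep.rw.simps[OF u] urep.rlU[OF u] urep.rlS[OF u] by simp
  also have "\<dots> = (\<Sum>i\<in>{1..n}. if i = p then M0 a i * M1 (pm i) b * (M0i q c * M1i d (pm q)) else 0)"
    by (intro sum.cong refl, subst inner, simp)
  also have "\<dots> = M0 a p * M1 (pm p) b * M0i q c * M1i d (pm q)" using pq by (simp add: mult.assoc)
  finally show ?thesis .
qed

lemma ev_SU2:
  assumes pq: "p \<noteq> q" "p \<in> {1..n}" "q \<in> {1..n}"
  shows "ev n M0 M0i M1 M1i pm p q (2,-1) [Ustar a b, U c d] = M0i q a * M1i b (pm q) * M0 c p * M1 (pm p) d"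
proof -
  have inner: "(\<Sum>i\<in>{1..n}. M0 c i * M1 (pm i) d * dl (2,-1) (gmul (gmul (1,0) (geninv p q j)) (gen p q i)))
      = (if j = q then M0 c p * M1 (pm p) d else 0)" for j
  proof -
    have "(\<Sum>i\<in>{1..n}. M0 c i * M1 (pm i) d * dl (2,-1) (gmul (gmul (1,0) (geninv p q j)) (gen p q i)))
        = (\<Sum>i\<in>{1..n}. if i = p then (if j = q then M0 c i * M1 (pm i) d else 0) else 0)"
      by (intro sum.cong refl) (simp add: key2[OF pq(1)])
    then show ?thesis using pq by simp
  qed
  have "ev n M0 M0i M1 M1i pm p q (2,-1) [Ustar a b, U c d] =
     (\<Sum>j\<in>{1..n}. M0i j a * M1i b (pm j) * (\<Sum>i\<in>{1..n}. M0 c i * M1 (pm i) d * dl (2,-1) (gmul (gmul (1,0) (geninv p q j)) (gen p q i))))"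
    unfolding ev_def urep.rw.simps[OF u] urep.rlU[OF u] urep.rlS[OF u] by simp
  also have "\<dots> = (\<Sum>j\<in>{1..n}. if j = q then M0i j a * M1i b (pm j) * (M0 c p * M1 (pm p) d) else 0)"
    by (intro sum.cong refl, subst inner, simp)
  also have "\<dots> = M0i q a * M1i b (pm q) * M0 c p * M1 (pm p) d" using pq by (simp add: mult.assoc)
  finally show ?thesis .
qed

end



type_synonym 'k term6 = "'k \<times> 'k \<times> nat \<times> nat \<times> nat \<times> nat"

definition evp :: "nat \<Rightarrow> grp \<Rightarrow> 'k::field term6 \<Rightarrow> 'k term6 \<Rightarrow> sym list \<Rightarrow> 'k" where
  "evp n \<gamma> lt rt w = (case lt of (l, t, x, y, p, q) \<Rightarrow> case rt of (m, t', x', y', p', q') \<Rightarrow>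
     l * m * ev n (el t x y) (el (-t) x y) (el t' x' y') (el (-t') x' y') (pmap p q p' q') p q \<gamma> w)"

definition PsiT :: "nat \<Rightarrow> grp \<Rightarrow> 'k::field term6 list \<Rightarrow> 'k term6 list \<Rightarrow> sym list \<Rightarrow> 'k" where
  "PsiT n \<gamma> Ls Rs w = sum_list (map (\<lambda>lt. sum_list (map (\<lambda>rt. evp n \<gamma> lt rt w) Rs)) Ls)"

definition okT :: "nat \<Rightarrow> 'k term6 \<Rightarrow> bool" where
  "okT n tm = (case tm of (l, t, x, y, p, q) \<Rightarrow> okt n x y p q)"

lemma sum_sum_list: fixes g :: "'a \<Rightarrow> 'k::field"
  shows "(\<Sum>w\<in>S. g w * sum_list (map (F w) xs)) = sum_list (map (\<lambda>x. \<Sum>w\<in>S. g w * F w x) xs)"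
  by (induction xs) (simp_all add: distrib_left sum.distrib)

lemma sl0: "(\<And>x. x \<in> set xs \<Longrightarrow> f x = (0::'k::field)) \<Longrightarrow> sum_list (map f xs) = 0"
  by (induction xs) auto

lemma evp_kill:
  assumes "okT n lt" "okT n rt" "P \<in> Iideal n"
  shows "(\<Sum>w\<in>{w. P w \<noteq> 0}. P w * evp n \<gamma> lt rt w) = 0"
proof -
  obtain l t x y p q where lt: "lt = (l, t, x, y, p, q)" by (cases lt) auto
  obtain m t' x' y' p' q' where rt: "rt = (m, t', x', y', p', q')" by (cases rt) auto
  have ok1: "okt n x y p q" and ok2: "okt n x' y' p' q'" using assms(1,2) by (simp_all add: okT_def lt rt)
  note u = urep_inst[OF ok1 ok2, of t t']
  have "(\<Sum>w\<in>{w. P w \<noteq> 0}. P w * evp n \<gamma> lt rt w) =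
      l * m * urep.Phi n (el t x y) (el (-t) x y) (el t' x' y') (el (-t') x' y') (pmap p q p' q') (gen p q) (geninv p q) P (dl \<gamma>) (1,0)"
    by (simp add: evp_def lt rt ev_def urep.Phi_def[OF u] sum_distrib_left mult_ac)
  also have "\<dots> = 0"
    using urep.ideal_Phi[OF u, of P] assms(3) by (simp add: Iideal_def)
  finally show ?thesis .
qed

lemma PsiT_kill:
  assumes "list_all (okT n) Ls" "list_all (okT n) Rs" "P \<in> Iideal n"
  shows "(\<Sum>w\<in>{w. P w \<noteq> 0}. P w * PsiT n \<gamma> Ls Rs w) = 0"
  unfolding PsiT_def sum_sum_list
proof (rule sl0, rule sl0)
  fix lt rt assume "lt \<in> set Ls" "rt \<in> set Rs"
  then have "okT n lt" "okT n rt" using assms(1,2) by (auto simp: list_all_iff)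
  then show "(\<Sum>w\<in>{w. P w \<noteq> 0}. P w * evp n \<gamma> lt rt w) = 0" using evp_kill assms(3) by blast
qed

lemma okT_dest: "okT n (l, t, x, y, p, q) = okt n x y p q" by (simp add: okT_def)

lemma evp_Z:
  fixes lt :: "'k::field term6"
  assumes ok: "okT n lt" "okT n rt"
    and z: "\<And>M0 M0i M1 M1i pm p q. urep n M0 M0i M1 M1i pm (gen p q) (geninv p q) \<Longrightarrow> ev n M0 M0i M1 M1i pm p q \<gamma> w = (0::'k::field)"
  shows "evp n \<gamma> lt rt w = 0"
proof -
  obtain l t x y p q where lt: "lt = (l, t, x, y, p, q)" by (cases lt) auto
  obtain m t' x' y' p' q' where rt: "rt = (m, t', x', y', p', q')" by (cases rt) auto
  have ok1: "okt n x y p q" and ok2: "okt n x' y' p' q'" using ok by (simp_all add: okT_def lt rt)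
  note u = urep_inst[OF ok1 ok2, of t t']
  show ?thesis using z[OF u] by (simp add: evp_def lt rt)
qed

lemma evp_US:
  assumes "okt n x y p q" "okt n x' y' p' q'"
  shows "evp n (2,-2) (l, t, x, y, p, q) (m, t', x', y', p', q') [U a b, Ustar c d]
    = (l * el t x y a p * el (-t) x y q c) * (m * el t' x' y' p' b * el (-t') x' y' d q')"
proof -
  note u = urep_inst[OF assms, of t t']
  have pq: "p \<noteq> q" "p \<in> {1..n}" "q \<in> {1..n}" "p' \<noteq> q'" using assms by (auto simp: okt_def)
  show ?thesis unfolding evp_def using ev_US1[OF u pq(1-3)] pmap_p[OF pq(1,4)] pmap_q[OF pq(1,4)]
    by (simp add: mult_ac)
qed

lemma evp_SU:
  assumes "okt n x y p q" "okt n x' y' p' q'"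
  shows "evp n (2,-1) (l, t, x, y, p, q) (m, t', x', y', p', q') [Ustar a b, U c d]
    = (l * el (-t) x y q a * el t x y c p) * (m * el (-t') x' y' b q' * el t' x' y' p' d)"
proof -
  note u = urep_inst[OF assms, of t t']
  have pq: "p \<noteq> q" "p \<in> {1..n}" "q \<in> {1..n}" "p' \<noteq> q'" using assms by (auto simp: okt_def)
  show ?thesis unfolding evp_def using ev_SU2[OF u pq(1-3)] pmap_p[OF pq(1,4)] pmap_q[OF pq(1,4)]
    by (simp add: mult_ac)
qed

definition luu :: "nat \<Rightarrow> nat \<Rightarrow> 'k::field term6 \<Rightarrow> 'k" where
  "luu a c lt = (case lt of (l, t, x, y, p, q) \<Rightarrow> l * el t x y a p * el (-t) x y q c)"
definition ruu :: "nat \<Rightarrow> nat \<Rightarrow> 'k::field term6 \<Rightarrow> 'k" where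
  "ruu b d rt = (case rt of (m, t, x, y, p, q) \<Rightarrow> m * el t x y p b * el (-t) x y d q)"
definition lsu :: "nat \<Rightarrow> nat \<Rightarrow> 'k::field term6 \<Rightarrow> 'k" where
  "lsu a c lt = (case lt of (l, t, x, y, p, q) \<Rightarrow> l * el (-t) x y q a * el t x y c p)"
definition rsu :: "nat \<Rightarrow> nat \<Rightarrow> 'k::field term6 \<Rightarrow> 'k" where
  "rsu b d rt = (case rt of (m, t, x, y, p, q) \<Rightarrow> m * el (-t) x y b q * el t x y p d)"

lemma luu_simp[simp]: "luu a c (l, t, x, y, p, q) = l * el t x y a p * el (-t) x y q c" by (simp add: luu_def)
lemma ruu_simp[simp]: "ruu b d (m, t, x, y, p, q) = m * el t x y p b * el (-t) x y d q" by (simp add: ruu_def)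
lemma lsu_simp[simp]: "lsu a c (l, t, x, y, p, q) = l * el (-t) x y q a * el t x y c p" by (simp add: lsu_def)
lemma rsu_simp[simp]: "rsu b d (m, t, x, y, p, q) = m * el (-t) x y b q * el t x y p d" by (simp add: rsu_def)

lemma PsiT_US:
  assumes "list_all (okT n) Ls" "list_all (okT n) Rs"
  shows "PsiT n (2,-2) Ls Rs [U a b, Ustar c d] = sum_list (map (luu a c) Ls) * sum_list (map (ruu b d) Rs)"
proof -
  have "PsiT n (2,-2) Ls Rs [U a b, Ustar c d] = sum_list (map (\<lambda>lt. sum_list (map (\<lambda>rt. luu a c lt * ruu b d rt) Rs)) Ls)"
    unfolding PsiT_def
  proof (intro arg_cong[where f=sum_list] map_cong refl)
    fix lt rt assume "lt \<in> set Ls" "rt \<in> set Rs"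
    then have "okT n lt" "okT n rt" using assms by (auto simp: list_all_iff)
    then show "evp n (2,-2) lt rt [U a b, Ustar c d] = luu a c lt * ruu b d rt"
      by (cases lt, cases rt) (simp add: okT_def evp_US)
  qed
  also have "\<dots> = sum_list (map (luu a c) Ls) * sum_list (map (ruu b d) Rs)"
    by (simp only: sum_list_const_mult sum_list_mult_const)
  finally show ?thesis .
qed

lemma PsiT_SU:
  assumes "list_all (okT n) Ls" "list_all (okT n) Rs"
  shows "PsiT n (2,-1) Ls Rs [Ustar a b, U c d] = sum_list (map (lsu a c) Ls) * sum_list (map (rsu b d) Rs)"
proof -
  have "PsiT n (2,-1) Ls Rs [Ustar a b, U c d] = sum_list (map (\<lambda>lt. sum_list (map (\<lambda>rt. lsu a c lt * rsu b d rt) Rs)) Ls)"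
    unfolding PsiT_def
  proof (intro arg_cong[where f=sum_list] map_cong refl)
    fix lt rt assume "lt \<in> set Ls" "rt \<in> set Rs"
    then have "okT n lt" "okT n rt" using assms by (auto simp: list_all_iff)
    then show "evp n (2,-1) lt rt [Ustar a b, U c d] = lsu a c lt * rsu b d rt"
      by (cases lt, cases rt) (simp add: okT_def evp_SU)
  qed
  also have "\<dots> = sum_list (map (lsu a c) Ls) * sum_list (map (rsu b d) Rs)"
    by (simp only: sum_list_const_mult sum_list_mult_const)
  finally show ?thesis .
qed

lemma PsiT_Z:
  assumes "list_all (okT n) Ls" "list_all (okT n) Rs"
    and z: "\<And>M0 M0i M1 M1i pm p q. urep n M0 M0i M1 M1i pm (gen p q) (geninv p q) \<Longrightarrow> ev n M0 M0i M1 M1i pm p q \<gamma> w = (0::'k::field)"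
  shows "PsiT n \<gamma> (Ls :: 'k term6 list) Rs w = 0"
  unfolding PsiT_def
proof (rule sl0, rule sl0)
  fix lt rt assume "lt \<in> set Ls" "rt \<in> set Rs"
  then have "okT n lt" "okT n rt" using assms(1,2) by (auto simp: list_all_iff)
  then show "evp n \<gamma> lt rt w = 0" using evp_Z z by blast
qed



lemma supp_fin:
  assumes "2 \<le> n" "P \<in> Iideal n"
  shows "finite {w. P w \<noteq> 0}"
proof -
  have ok: "okt n 1 2 1 2" using assms(1) by (auto simp: okt_def)
  note u = urep_inst[OF ok ok, of 0 0]
  show ?thesis using urep.ideal_Phi[OF u, of P] assms(2) by (simp add: Iideal_def)
qed

lemma not_tip_crit:
  fixes \<Psi> :: "sym list \<Rightarrow> 'k::field"
  assumes n2: "2 \<le> n"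
    and kill: "\<And>P. P \<in> (Iideal n :: 'k fpoly set) \<Longrightarrow> (\<Sum>w\<in>{w. P w \<noteq> 0}. P w * \<Psi> w) = 0"
    and nz: "\<Psi> w0 \<noteq> 0" and lower: "\<And>w. mono_less w w0 \<Longrightarrow> \<Psi> w = 0"
  shows "w0 \<notin> Tip (Iideal n :: 'k fpoly set)"
proof
  assume "w0 \<in> Tip (Iideal n :: 'k fpoly set)"
  then obtain P where P: "P \<in> (Iideal n :: 'k fpoly set)" "is_tip P w0" unfolding Tip_def by blast
  then have pw0: "P w0 \<noteq> 0" and others: "\<And>w'. P w' \<noteq> 0 \<Longrightarrow> w' = w0 \<or> mono_less w' w0"
    by (auto simp: is_tip_def)
  have "(\<Sum>w\<in>{w. P w \<noteq> 0}. P w * \<Psi> w) = (\<Sum>w\<in>{w. P w \<noteq> 0}. if w = w0 then P w0 * \<Psi> w0 else 0)"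
    by (rule sum.cong) (auto dest: others lower)
  also have "\<dots> = P w0 * \<Psi> w0" using supp_fin[OF n2 P(1)] pw0 by simp
  finally show False using kill[OF P(1)] pw0 nz by simp
qed

lemma mono_less2:
  assumes "mono_less w [x0, y0]"
  shows "length w < 2 \<or> (\<exists>x y. w = [x, y] \<and> (sym_less x x0 \<or> (x = x0 \<and> sym_less y y0)))"
proof (cases "length w < 2")
  case False
  with assms have l: "length w = 2" by (auto simp: mono_less_def)
  with assms have k: "\<exists>k<2. take k w = take k [x0, y0] \<and> sym_less (w ! k) ([x0, y0] ! k)"
    unfolding mono_less_def by (metis length_Cons list.size(3) numeral_2_eq_2 order.irrefl)
  from l obtain x y where w: "w = [x, y]"
    by (cases w; cases "tl w") auto
  from k obtain k where "k < 2" "take k w = take k [x0, y0]" "sym_less (w ! k) ([x0, y0] ! k)" by blast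
  then have "sym_less x x0 \<or> (x = x0 \<and> sym_less y y0)"
    unfolding w by (cases k) (auto simp: less_Suc_eq)
  then show ?thesis using w by blast
qed simp



definition LsUU :: "nat \<Rightarrow> nat \<Rightarrow> nat \<Rightarrow> 'k::field term6 list" where
  "LsUU n a c = (if c < a then [(1,0,a,c,a,c)] else if a < c then [(1,1,c,a,a,c)] else [(-1,1,n,a,a,n),(1,0,a,n,a,n)])"
definition RsUU :: "nat \<Rightarrow> nat \<Rightarrow> nat \<Rightarrow> 'k::field term6 list" where
  "RsUU n b d = (if d < b then [(1,0,b,d,b,d)] else if b < d then [(1,1,b,d,b,d)] else [(-1,1,b,n,b,n),(1,0,b,n,b,n)])"
definition LsSU :: "nat \<Rightarrow> nat \<Rightarrow> nat \<Rightarrow> 'k::field term6 list" where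
  "LsSU n a c = (if a < c then [(1,0,c,a,c,a)] else if c < a then [(1,1,a,c,c,a)] else [(-1,1,1,a,a,1),(-1,0,1,a,1,a)])"
definition RsSU :: "nat \<Rightarrow> nat \<Rightarrow> nat \<Rightarrow> 'k::field term6 list" where
  "RsSU n b d = (if b < d then [(1,0,d,b,d,b)] else if d < b then [(1,1,d,b,d,b)] else [(-1,1,b,1,b,1),(-1,0,b,1,1,b)])"

lemma ok_LsUU: "a \<in> {1..n} \<Longrightarrow> c \<in> {1..n} \<Longrightarrow> (a, c) \<noteq> (n, n) \<Longrightarrow> list_all (okT n) (LsUU n a c)"
  by (auto simp: LsUU_def okT_def okt_def)
lemma ok_RsUU: "b \<in> {1..n} \<Longrightarrow> d \<in> {1..n} \<Longrightarrow> (b, d) \<noteq> (n, n) \<Longrightarrow> list_all (okT n) (RsUU n b d)"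
  by (auto simp: RsUU_def okT_def okt_def)
lemma ok_LsSU: "a \<in> {1..n} \<Longrightarrow> c \<in> {1..n} \<Longrightarrow> (a, c) \<noteq> (1, 1) \<Longrightarrow> list_all (okT n) (LsSU n a c)"
  by (auto simp: LsSU_def okT_def okt_def)
lemma ok_RsSU: "b \<in> {1..n} \<Longrightarrow> d \<in> {1..n} \<Longrightarrow> (b, d) \<noteq> (1, 1) \<Longrightarrow> list_all (okT n) (RsSU n b d)"
  by (auto simp: RsSU_def okT_def okt_def)

context fixes n a c :: nat assumes rng: "a \<in> {1..n}" "c \<in> {1..n}" begin

lemma LUU1: "(a, c) \<noteq> (n, n) \<Longrightarrow> a' < a \<Longrightarrow> sum_list (map (luu a' c') (LsUU n a c :: 'k::field term6 list)) = 0"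
  using rng by (auto simp: LsUU_def el_def)
lemma LUU2: "(a, c) \<noteq> (n, n) \<Longrightarrow> c < c' \<Longrightarrow> sum_list (map (luu a c') (LsUU n a c :: 'k::field term6 list)) = 0"
  using rng by (auto simp: LsUU_def el_def)
lemma LUU3: "(a, c) \<noteq> (n, n) \<Longrightarrow> sum_list (map (luu a c) (LsUU n a c :: 'k::field term6 list)) \<noteq> 0"
  using rng by (auto simp: LsUU_def el_def)

lemma LSU1: "(a, c) \<noteq> (1, 1) \<Longrightarrow> a < a' \<Longrightarrow> sum_list (map (lsu a' c') (LsSU n a c :: 'k::field term6 list)) = 0"
  using rng by (auto simp: LsSU_def el_def)
lemma LSU2: "(a, c) \<noteq> (1, 1) \<Longrightarrow> c' < c \<Longrightarrow> sum_list (map (lsu a c') (LsSU n a c :: 'k::field term6 list)) = 0"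
  using rng by (auto simp: LsSU_def el_def)
lemma LSU3: "(a, c) \<noteq> (1, 1) \<Longrightarrow> sum_list (map (lsu a c) (LsSU n a c :: 'k::field term6 list)) \<noteq> 0"
  using rng by (auto simp: LsSU_def el_def)

end

context fixes n b d :: nat assumes rng: "b \<in> {1..n}" "d \<in> {1..n}" begin

lemma RUU1: "(b, d) \<noteq> (n, n) \<Longrightarrow> b' < b \<Longrightarrow> sum_list (map (ruu b' d') (RsUU n b d :: 'k::field term6 list)) = 0"
  using rng by (auto simp: RsUU_def el_def)
lemma RUU2: "(b, d) \<noteq> (n, n) \<Longrightarrow> d < d' \<Longrightarrow> sum_list (map (ruu b d') (RsUU n b d :: 'k::field term6 list)) = 0"
  using rng by (auto simp: RsUU_def el_def)
lemma RUU3: "(b, d) \<noteq> (n, n) \<Longrightarrow> sum_list (map (ruu b d) (RsUU n b d :: 'k::field term6 list)) \<noteq> 0"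
  using rng by (auto simp: RsUU_def el_def)

lemma RSU1: "(b, d) \<noteq> (1, 1) \<Longrightarrow> b < b' \<Longrightarrow> sum_list (map (rsu b' d') (RsSU n b d :: 'k::field term6 list)) = 0"
  using rng by (auto simp: RsSU_def el_def)
lemma RSU2: "(b, d) \<noteq> (1, 1) \<Longrightarrow> d' < d \<Longrightarrow> sum_list (map (rsu b d') (RsSU n b d :: 'k::field term6 list)) = 0"
  using rng by (auto simp: RsSU_def el_def)
lemma RSU3: "(b, d) \<noteq> (1, 1) \<Longrightarrow> sum_list (map (rsu b d) (RsSU n b d :: 'k::field term6 list)) \<noteq> 0"
  using rng by (auto simp: RsSU_def el_def)

end



lemma nontip_US:
  assumes n2: "2 \<le> n" and r: "a \<in> {1..n}" "b \<in> {1..n}" "c \<in> {1..n}" "d \<in> {1..n}"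
    and ac: "(a, c) \<noteq> (n, n)" and bd: "(b, d) \<noteq> (n, n)"
  shows "[U a b, Ustar c d] \<notin> Tip (Iideal n :: 'k::field fpoly set)"
proof -
  define Ls :: "'k term6 list" where "Ls = LsUU n a c"
  define Rs :: "'k term6 list" where "Rs = RsUU n b d"
  have okL: "list_all (okT n) Ls" unfolding Ls_def using ok_LsUU r ac by blast
  have okR: "list_all (okT n) Rs" unfolding Rs_def using ok_RsUU r bd by blast
  let ?\<Psi> = "PsiT n (2,-2) Ls Rs"
  have val: "?\<Psi> [U a' b', Ustar c' d'] = sum_list (map (luu a' c') Ls) * sum_list (map (ruu b' d') Rs)" for a' b' c' d'
    by (rule PsiT_US[OF okL okR])
  have z: "?\<Psi> w = 0" if "\<And>M0 M0i M1 M1i pm p q. urep n M0 M0i M1 M1i pm (gen p q) (geninv p q) \<Longrightarrow> ev n M0 M0i M1 M1i pm p q (2,-2) w = (0::'k)" for w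
    by (rule PsiT_Z[OF okL okR that])
  show ?thesis
  proof (rule not_tip_crit[OF n2])
    show "(\<Sum>w\<in>{w. P w \<noteq> 0}. P w * ?\<Psi> w) = 0" if "P \<in> Iideal n" for P
      using PsiT_kill[OF okL okR that] .
    show "?\<Psi> [U a b, Ustar c d] \<noteq> 0"
      unfolding val using LUU3[OF r(1,3) ac] RUU3[OF r(2,4) bd] by (simp add: Ls_def Rs_def)
    fix w assume "mono_less w [U a b, Ustar c d]"
    then consider "length w < 2" | x y where "w = [x, y]" "sym_less x (U a b)" | y where "w = [U a b, y]" "sym_less y (Ustar c d)"
      using mono_less2 by blast
    then show "?\<Psi> w = 0"
    proof cases
      case 1
      then consider "w = []" | x where "w = [x]" by (cases w) (auto simp: length_Suc_conv)
      then show ?thesis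
      proof cases
        case 1 then show ?thesis by (simp only:) (rule z, erule ev_nil, simp)
      next
        case 2 then show ?thesis by (simp only:) (rule z, erule ev_one, simp)
      qed
    next
      case 2
      show ?thesis
      proof (cases x)
        case (U a' b')
        note x = U
        show ?thesis
        proof (cases y)
          case (U c' d') then show ?thesis unfolding 2 x by (simp only:) (rule z, erule ev_UU, simp)
        next
          case (Ustar c' d')
          from 2 x have "a' < a \<or> (a' = a \<and> b' < b)" by auto
          then show ?thesis
          proof
            assume h: "a' < a"
            show ?thesis unfolding 2 x Ustar val by (simp add: Ls_def LUU1[OF r(1,3) ac h])
          next
            assume h: "a' = a \<and> b' < b"
            show ?thesis unfolding 2 x Ustar val by (simp add: Rs_def RUU1[OF r(2,4) bd conjunct2[OF h]])
          qed
        qed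
      next
        case (Ustar a' b')
        note x = Ustar
        show ?thesis
        proof (cases y)
          case (U c' d') then show ?thesis unfolding 2 x by (simp only:) (rule z, erule ev_SU1)
        next
          case (Ustar c' d') then show ?thesis unfolding 2 x by (simp only:) (rule z, erule ev_SS, simp)
        qed
      qed
    next
      case 3
      show ?thesis
      proof (cases y)
        case (U c' d') then show ?thesis using 3 by simp
      next
        case (Ustar c' d')
        from 3 Ustar have "c < c' \<or> (c' = c \<and> d < d')" by auto
        then show ?thesis
        proof
          assume h: "c < c'"
          show ?thesis unfolding 3 Ustar val by (simp add: Ls_def LUU2[OF r(1,3) ac h])
        next
          assume h: "c' = c \<and> d < d'"
          show ?thesis unfolding 3 Ustar val using h by (simp add: Rs_def RUU2[OF r(2,4) bd conjunct2[OF h]])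
        qed
      qed
    qed
  qed
qed

lemma nontip_SU:
  assumes n2: "2 \<le> n" and r: "a \<in> {1..n}" "b \<in> {1..n}" "c \<in> {1..n}" "d \<in> {1..n}"
    and ac: "(a, c) \<noteq> (1, 1)" and bd: "(b, d) \<noteq> (1, 1)"
  shows "[Ustar a b, U c d] \<notin> Tip (Iideal n :: 'k::field fpoly set)"
proof -
  define Ls :: "'k term6 list" where "Ls = LsSU n a c"
  define Rs :: "'k term6 list" where "Rs = RsSU n b d"
  have okL: "list_all (okT n) Ls" unfolding Ls_def using ok_LsSU r ac by blast
  have okR: "list_all (okT n) Rs" unfolding Rs_def using ok_RsSU r bd by blast
  let ?\<Psi> = "PsiT n (2,-1) Ls Rs"
  have val: "?\<Psi> [Ustar a' b', U c' d'] = sum_list (map (lsu a' c') Ls) * sum_list (map (rsu b' d') Rs)" for a' b' c' d'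
    by (rule PsiT_SU[OF okL okR])
  have z: "?\<Psi> w = 0" if "\<And>M0 M0i M1 M1i pm p q. urep n M0 M0i M1 M1i pm (gen p q) (geninv p q) \<Longrightarrow> ev n M0 M0i M1 M1i pm p q (2,-1) w = (0::'k)" for w
    by (rule PsiT_Z[OF okL okR that])
  show ?thesis
  proof (rule not_tip_crit[OF n2])
    show "(\<Sum>w\<in>{w. P w \<noteq> 0}. P w * ?\<Psi> w) = 0" if "P \<in> Iideal n" for P
      using PsiT_kill[OF okL okR that] .
    show "?\<Psi> [Ustar a b, U c d] \<noteq> 0"
      unfolding val using LSU3[OF r(1,3) ac] RSU3[OF r(2,4) bd] by (simp add: Ls_def Rs_def)
    fix w assume "mono_less w [Ustar a b, U c d]"
    then consider "length w < 2" | x y where "w = [x, y]" "sym_less x (Ustar a b)" | y where "w = [Ustar a b, y]" "sym_less y (U c d)"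
      using mono_less2 by blast
    then show "?\<Psi> w = 0"
    proof cases
      case 1
      then consider "w = []" | x where "w = [x]" by (cases w) (auto simp: length_Suc_conv)
      then show ?thesis
      proof cases
        case 1 then show ?thesis by (simp only:) (rule z, erule ev_nil, simp)
      next
        case 2 then show ?thesis by (simp only:) (rule z, erule ev_one, simp)
      qed
    next
      case 2
      show ?thesis
      proof (cases x)
        case (U a' b')
        then show ?thesis using 2 by simp
      next
        case (Ustar a' b')
        note x = Ustar
        show ?thesis
        proof (cases y)
          case (Ustar c' d') then show ?thesis unfolding 2 x by (simp only:) (rule z, erule ev_SS, simp)
        next
          case (U c' d')
          from 2 x have "a < a' \<or> (a' = a \<and> b < b')" by auto
          then show ?thesis
          proof
            assume h: "a < a'"
            show ?thesis unfolding 2 x U val by (simp add: Ls_def LSU1[OF r(1,3) ac h])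
          next
            assume h: "a' = a \<and> b < b'"
            show ?thesis unfolding 2 x U val by (simp add: Rs_def RSU1[OF r(2,4) bd conjunct2[OF h]])
          qed
        qed
      qed
    next
      case 3
      show ?thesis
      proof (cases y)
        case (Ustar c' d') then show ?thesis unfolding 3 by (simp only:) (rule z, erule ev_SS, simp)
      next
        case (U c' d')
        from 3 U have "c' < c \<or> (c' = c \<and> d' < d)" by auto
        then show ?thesis
        proof
          assume h: "c' < c"
          show ?thesis unfolding 3 U val by (simp add: Ls_def LSU2[OF r(1,3) ac h])
        next
          assume h: "c' = c \<and> d' < d"
          show ?thesis unfolding 3 U val using h by (simp add: Rs_def RSU2[OF r(2,4) bd conjunct2[OF h]])
        qed
      qed
    qed
  qed
qed



lemma sym_less_irrefl: "\<not> sym_less x x"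
  by (cases x) auto

lemma tip_rel:
  assumes v: "v \<in> Mset n" and j: "j \<in> {1..n}" and i: "i \<in> {1..n}" and n1: "1 \<le> n"
    and hl: "\<And>s. s \<in> {1..n} \<Longrightarrow> s \<noteq> 1 \<Longrightarrow> sym_less (v j (rev_idx n s)) (v j (rev_idx n 1))"
  shows "[v j (rev_idx n 1), mat_dag n v 1 (rev_idx n i)] \<in> Tip (Iideal n :: 'k::field fpoly set)"
proof -
  let ?ws = "\<lambda>s. [v j (rev_idx n s), mat_dag n v s (rev_idx n i)]"
  let ?w0 = "?ws 1"
  define P :: "'k fpoly" where "P = rel n v j i"
  have PI: "P \<in> Iideal n" unfolding P_def Iideal_def Rset_def
    using v j i by (intro ideal_gen.gen) blast
  have Pw: "P w = (\<Sum>s\<in>{1..n}. if w = ?ws s then 1 else 0) - (if j = i \<and> w = [] then 1 else 0)" for w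
    by (simp add: P_def rel_def monom_def)
  have eq1: "?w0 = ?ws s \<longleftrightarrow> s = 1" if "s \<in> {1..n}" for s
  proof
    assume h: "?w0 = ?ws s"
    show "s = 1"
    proof (rule ccontr)
      assume "s \<noteq> 1"
      then have "sym_less (v j (rev_idx n s)) (v j (rev_idx n 1))" using hl that by blast
      moreover have "v j (rev_idx n s) = v j (rev_idx n 1)" using h by simp
      ultimately show False using sym_less_irrefl by metis
    qed
  qed simp
  have "(\<Sum>s\<in>{1..n}. if ?w0 = ?ws s then (1::'k) else 0) = (\<Sum>s\<in>{1..n}. if s = 1 then 1 else 0)"
    apply (intro sum.cong refl)
    apply (subst eq1)
     apply auto
    done
  also have "\<dots> = 1" using n1 by simp
  finally have Pw0: "P ?w0 = 1" by (simp add: Pw)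
  have tip: "is_tip P ?w0"
    unfolding is_tip_def
  proof (intro conjI allI impI)
    show "P ?w0 \<noteq> 0" using Pw0 by simp
    fix w' assume "P w' \<noteq> 0"
    then have "(\<exists>s\<in>{1..n}. w' = ?ws s) \<or> w' = []"
      unfolding Pw by (auto split: if_splits intro: ccontr)
    then show "w' = ?w0 \<or> mono_less w' ?w0"
    proof
      assume "\<exists>s\<in>{1..n}. w' = ?ws s"
      then obtain s where s: "s \<in> {1..n}" "w' = ?ws s" by blast
      show ?thesis
      proof (cases "s = 1")
        case True then show ?thesis using s by simp
      next
        case False
        have "mono_less w' ?w0" unfolding mono_less_def s(2)
          using hl[OF s(1) False] by (intro disjI2 conjI) (auto intro!: exI[of _ 0])
        then show ?thesis by simp
      qed
    next
      assume "w' = []" then show ?thesis by (simp add: mono_less_def)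
    qed
  qed
  have "P \<noteq> (\<lambda>_. 0)" using Pw0 by (metis one_neq_zero)
  then show ?thesis unfolding Tip_def using PI tip by blast
qed

lemma r1: "rev_idx n 1 = n" "rev_idx n (Suc 0) = n" by (simp_all add: rev_idx_def)
lemma rn: "rev_idx n n = 1" by (simp add: rev_idx_def)
lemma r_lt: "s \<in> {1..n} \<Longrightarrow> s \<noteq> 1 \<Longrightarrow> rev_idx n s < n" by (auto simp: rev_idx_def)

lemma tip_US1:
  assumes a: "a \<in> {1..n}" and c: "c \<in> {1..n}"
  shows "[U a n, Ustar c n] \<in> Tip (Iideal n :: 'k::field fpoly set)"
proof -
  have n1: "1 \<le> n" using a by simp
  have "[umat a (rev_idx n 1), mat_dag n umat 1 (rev_idx n c)] \<in> Tip (Iideal n :: 'k::field fpoly set)"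
    by (rule tip_rel[OF _ a c n1]) (auto simp: Mset_def umat_def r1 r_lt)
  moreover have "[umat a (rev_idx n 1), mat_dag n umat 1 (rev_idx n c)] = [U a n, Ustar c n]"
    using c by (simp add: umat_def mat_dag_def r1 rr)
  ultimately show ?thesis by simp
qed

lemma tip_US2:
  assumes b: "b \<in> {1..n}" and d: "d \<in> {1..n}"
  shows "[U n b, Ustar n d] \<in> Tip (Iideal n :: 'k::field fpoly set)"
proof -
  have n1: "1 \<le> n" using b by simp
  have "[mat_t umat b (rev_idx n 1), mat_dag n (mat_t umat) 1 (rev_idx n d)] \<in> Tip (Iideal n :: 'k::field fpoly set)"
    by (rule tip_rel[OF _ b d n1]) (auto simp: Mset_def umat_def mat_t_def r1 r_lt)
  moreover have "[mat_t umat b (rev_idx n 1), mat_dag n (mat_t umat) 1 (rev_idx n d)] = [U n b, Ustar n d]"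
    using d by (simp add: umat_def mat_dag_def mat_t_def r1 rr)
  ultimately show ?thesis by simp
qed

lemma tip_SU1:
  assumes a: "a \<in> {1..n}" and c: "c \<in> {1..n}"
  shows "[Ustar a 1, U c 1] \<in> Tip (Iideal n :: 'k::field fpoly set)"
proof -
  have n1: "1 \<le> n" using a by simp
  have ra: "rev_idx n a \<in> {1..n}" and rc: "rev_idx n c \<in> {1..n}" using a c by (auto simp: rev_idx_def)
  have "[mat_star n umat (rev_idx n a) (rev_idx n 1), mat_dag n (mat_star n umat) 1 (rev_idx n (rev_idx n c))]
      \<in> Tip (Iideal n :: 'k::field fpoly set)"
    by (rule tip_rel[OF _ ra rc n1]) (use a in \<open>auto simp: Mset_def umat_def mat_star_def r1 rr rev_idx_def\<close>)
  moreover have "[mat_star n umat (rev_idx n a) (rev_idx n 1), mat_dag n (mat_star n umat) 1 (rev_idx n (rev_idx n c))]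
      = [Ustar a 1, U c 1]"
    using a c n1 by (simp add: umat_def mat_dag_def mat_star_def r1 rn rr)
  ultimately show ?thesis by simp
qed

lemma tip_SU2:
  assumes b: "b \<in> {1..n}" and d: "d \<in> {1..n}"
  shows "[Ustar 1 b, U 1 d] \<in> Tip (Iideal n :: 'k::field fpoly set)"
proof -
  have n1: "1 \<le> n" using b by simp
  have rb: "rev_idx n b \<in> {1..n}" and rd: "rev_idx n d \<in> {1..n}" using b d by (auto simp: rev_idx_def)
  have "[mat_dag n umat (rev_idx n b) (rev_idx n 1), mat_dag n (mat_dag n umat) 1 (rev_idx n (rev_idx n d))]
      \<in> Tip (Iideal n :: 'k::field fpoly set)"
    by (rule tip_rel[OF _ rb rd n1]) (use b in \<open>auto simp: Mset_def umat_def mat_dag_def r1 rr rev_idx_def\<close>)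
  moreover have "[mat_dag n umat (rev_idx n b) (rev_idx n 1), mat_dag n (mat_dag n umat) 1 (rev_idx n (rev_idx n d))]
      = [Ustar 1 b, U 1 d]"
    using b d n1 by (simp add: umat_def mat_dag_def r1 rn rr)
  ultimately show ?thesis by simp
qed



lemma char_US:
  assumes n2: "2 \<le> n" and r: "a \<in> {1..n}" "b \<in> {1..n}" "c \<in> {1..n}" "d \<in> {1..n}"
  shows "[U a b, Ustar c d] \<notin> Tip (Iideal n :: 'k::field fpoly set) \<longleftrightarrow> (b, d) \<noteq> (n, n) \<and> (a, c) \<noteq> (n, n)"
proof (cases "(b, d) = (n, n)")
  case True
  then show ?thesis using tip_US1[OF r(1,3), where 'k='k] by auto
next
  case False
  note bd = False
  show ?thesis
  proof (cases "(a, c) = (n, n)")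
    case True
    then show ?thesis using tip_US2[OF r(2,4), where 'k='k] by auto
  next
    case False
    then show ?thesis using nontip_US[OF n2 r False bd, where 'k='k] bd by auto
  qed
qed

lemma char_SU:
  assumes n2: "2 \<le> n" and r: "a \<in> {1..n}" "b \<in> {1..n}" "c \<in> {1..n}" "d \<in> {1..n}"
  shows "[Ustar a b, U c d] \<notin> Tip (Iideal n :: 'k::field fpoly set) \<longleftrightarrow> (b, d) \<noteq> (1, 1) \<and> (a, c) \<noteq> (1, 1)"
proof (cases "(b, d) = (1, 1)")
  case True
  then show ?thesis using tip_SU1[OF r(1,3), where 'k='k] by auto
next
  case False
  note bd = False
  show ?thesis
  proof (cases "(a, c) = (1, 1)")
    case True
    then show ?thesis using tip_SU2[OF r(2,4), where 'k='k] by auto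
  next
    case False
    then show ?thesis using nontip_SU[OF n2 r False bd, where 'k='k] bd by auto
  qed
qed

lemma r_eq_n: "x \<in> {1..n} \<Longrightarrow> rev_idx n x = n \<longleftrightarrow> x = 1" by (auto simp: rev_idx_def)
lemma r_eq_1: "x \<in> {1..n} \<Longrightarrow> rev_idx n x = 1 \<longleftrightarrow> x = n" by (auto simp: rev_idx_def)

theorem lemma4p2:
  fixes n :: nat and v :: smat and j1 j2 i1 i2 :: nat
  assumes "n \<ge> 2" and "v \<in> Mset n"
    and "j1 \<in> {1..n}" and "j2 \<in> {1..n}" and "i1 \<in> {1..n}" and "i2 \<in> {1..n}"
  shows "[v j1 i1, mat_dag n v i2 j2] \<notin> Tip (Iideal n :: ('k::field) fpoly set)
     \<longleftrightarrow> (i1, i2) \<noteq> (n, 1) \<and> (j1, j2) \<noteq> (n, 1)"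
proof -
  note n2 = assms(1) and r = assms(3-6)
  have rj1: "rev_idx n j1 \<in> {1..n}" and rj2: "rev_idx n j2 \<in> {1..n}"
    and ri1: "rev_idx n i1 \<in> {1..n}" and ri2: "rev_idx n i2 \<in> {1..n}"
    using r by (auto simp: rev_idx_def)
  from assms(2) consider "v = umat" | "v = mat_t umat" | "v = mat_star n umat" | "v = mat_dag n umat"
    unfolding Mset_def by blast
  then show ?thesis
  proof cases
    case 1
    have w: "[v j1 i1, mat_dag n v i2 j2] = [U j1 i1, Ustar (rev_idx n j2) (rev_idx n i2)]"
      by (simp add: 1 umat_def mat_dag_def)
    show ?thesis unfolding w char_US[OF n2 r(1) r(3) rj2 ri2]
      using r_eq_n[OF r(2)] r_eq_n[OF r(4)] by auto
  next
    case 2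
    have w: "[v j1 i1, mat_dag n v i2 j2] = [U i1 j1, Ustar (rev_idx n i2) (rev_idx n j2)]"
      by (simp add: 2 umat_def mat_dag_def mat_t_def)
    show ?thesis unfolding w char_US[OF n2 r(3) r(1) ri2 rj2]
      using r_eq_n[OF r(2)] r_eq_n[OF r(4)] by auto
  next
    case 3
    have w: "[v j1 i1, mat_dag n v i2 j2] = [Ustar (rev_idx n j1) (rev_idx n i1), U j2 i2]"
      using r by (simp add: 3 umat_def mat_dag_def mat_star_def rr)
    show ?thesis unfolding w char_SU[OF n2 rj1 ri1 r(2) r(4)]
      using r_eq_1[OF r(1)] r_eq_1[OF r(3)] by auto
  next
    case 4
    have w: "[v j1 i1, mat_dag n v i2 j2] = [Ustar (rev_idx n i1) (rev_idx n j1), U i2 j2]"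
      using r by (simp add: 4 umat_def mat_dag_def rr)
    show ?thesis unfolding w char_SU[OF n2 ri1 rj1 r(4) r(2)]
      using r_eq_1[OF r(1)] r_eq_1[OF r(3)] by auto
  qed
qed


end
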